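(* Let $n\ge 1$, let $\gamma_1,\dots,\gamma_n\in\mathbb{C}$, and let $f,s_1,\dots,s_n$ be $(n-1)$-times differentiable functions of $z$. Then $$W^{\gamma_1,\dots,\gamma_n}_n(f s_1,\dots,f s_n)=f^n\cdot W^{\gamma_1,\dots,\gamma_n}_n(s_1,\dots,s_n).$$
   Context: For constants $\gamma_1,\dots,\gamma_n$ put $\nabla_i=\partial_z+\gamma_i$. The $Z$-twisted Wronskian ($Z=\mathrm{diag}(\gamma_1,\dots,\gamma_n)$) of functions $s_1,\dots,s_n$ is the determinant $$W^{\gamma_1,\dots,\gamma_n}_n(s_1,\dots,s_n)=\det_{1\le i,j\le n}\big[\nabla_i^{\,j-1}s_i\big].$$ *)

theory Defs
  imports "HOL-Complex_Analysis.Complex_Analysis" "Jordan_Normal_Form.Determinant"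
begin

definition tw_deriv :: "complex \<Rightarrow> (complex \<Rightarrow> complex) \<Rightarrow> (complex \<Rightarrow> complex)" where
  "tw_deriv \<gamma> g = (\<lambda>z. deriv g z + \<gamma> * g z)"

text \<open>Z-twisted Wronskian at the point z; rows indexed by i < n (function s i, twist gamma i),
  columns by j < n (power nabla_i^j), 0-based.\<close>
definition twisted_wronskian ::
  "nat \<Rightarrow> (nat \<Rightarrow> complex) \<Rightarrow> (nat \<Rightarrow> complex \<Rightarrow> complex) \<Rightarrow> complex \<Rightarrow> complex" where
  "twisted_wronskian n \<gamma> s z =
     det (mat n n (\<lambda>(i, j). ((tw_deriv (\<gamma> i)) ^^ j) (s i) z))"

definition k_times_differentiable_on :: "nat \<Rightarrow> (complex \<Rightarrow> complex) \<Rightarrow> complex set \<Rightarrow> bool" where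
  "k_times_differentiable_on k g S \<longleftrightarrow>
     (\<forall>j<k. \<forall>z\<in>S. (deriv ^^ j) g field_differentiable (at z))"

end

theory Submission
  imports Defs
begin

lemma comb_step:
  fixes a b :: "nat \<Rightarrow> complex"
  shows "(\<Sum>k\<le>j. of_nat (j choose k) * (a (Suc k) * b (j - k) + a k * b (Suc (j - k))))
       = (\<Sum>k\<le>Suc j. of_nat (Suc j choose k) * a k * b (Suc j - k))"
proof -
  have r: "(\<Sum>k\<le>Suc j. of_nat (Suc j choose k) * a k * b (Suc j - k))
     = a 0 * b (Suc j) + (\<Sum>k\<le>j. of_nat (j choose k) * a (Suc k) * b (j - k))
        + (\<Sum>k\<le>j. of_nat (j choose Suc k) * a (Suc k) * b (j - k))"
    by (subst sum.atMost_Suc_shift) (simp add: algebra_simps sum.distrib)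
  have "(\<Sum>k\<le>Suc j. of_nat (j choose k) * a k * b (Suc j - k))
     = a 0 * b (Suc j) + (\<Sum>k\<le>j. of_nat (j choose Suc k) * a (Suc k) * b (j - k))"
    by (subst sum.atMost_Suc_shift) simp
  moreover have "(\<Sum>k\<le>Suc j. of_nat (j choose k) * a k * b (Suc j - k))
     = (\<Sum>k\<le>j. of_nat (j choose k) * a k * b (Suc (j - k)))"
    by (simp add: Suc_diff_le)
  ultimately show ?thesis using r
    by (simp add: algebra_simps sum.distrib)
qed

lemma transfer_open:
  assumes "open S" "z \<in> S" "\<And>w. w \<in> S \<Longrightarrow> F w = G w" "(G has_field_derivative D) (at z)"
  shows "F field_differentiable at z \<and> deriv F z = D"
proof -
  have "(F has_field_derivative D) (at z)"
    using has_field_derivative_transform_within_open[OF assms(4) assms(1,2)] assms(3) by metis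
  then show ?thesis by (auto simp: field_differentiable_def DERIV_imp_deriv)
qed

lemma kd_mono: "k_times_differentiable_on K g S \<Longrightarrow> L \<le> K \<Longrightarrow> k_times_differentiable_on L g S"
  unfolding k_times_differentiable_on_def by auto

lemma kd_deriv: "k_times_differentiable_on (Suc K) g S \<Longrightarrow> k_times_differentiable_on K (deriv g) S"
  unfolding k_times_differentiable_on_def
proof (intro allI impI ballI)
  fix j z assume a: "\<forall>j<Suc K. \<forall>z\<in>S. (deriv ^^ j) g field_differentiable at z" "j < K" "z \<in> S"
  have "(deriv ^^ j) (deriv g) = (deriv ^^ Suc j) g" by (simp only: funpow_Suc_right comp_def)
  then show "(deriv ^^ j) (deriv g) field_differentiable at z" using a by auto
qed

lemma kd_lin:
  assumes S: "open S" and g: "k_times_differentiable_on K g S" and h: "k_times_differentiable_on K h S"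
  shows "(\<forall>l\<le>K. \<forall>z\<in>S. (deriv ^^ l) (\<lambda>w. a * g w + b * h w) z = a * (deriv ^^ l) g z + b * (deriv ^^ l) h z)
     \<and> k_times_differentiable_on K (\<lambda>w. a * g w + b * h w) S"
proof -
  have D: "((\<lambda>w. a * (deriv ^^ l) g w + b * (deriv ^^ l) h w) has_field_derivative
            a * deriv ((deriv ^^ l) g) z + b * deriv ((deriv ^^ l) h) z) (at z)" if "l < K" "z \<in> S" for l z
  proof -
    have "(deriv ^^ l) g field_differentiable at z" "(deriv ^^ l) h field_differentiable at z"
      using g h that unfolding k_times_differentiable_on_def by auto
    then have "((deriv ^^ l) g has_field_derivative deriv ((deriv ^^ l) g) z) (at z)"
      "((deriv ^^ l) h has_field_derivative deriv ((deriv ^^ l) h) z) (at z)"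
      by (auto simp: field_differentiable_derivI)
    then show ?thesis
      by (auto intro!: derivative_eq_intros)
  qed
  have E: "\<forall>z\<in>S. (deriv ^^ l) (\<lambda>w. a * g w + b * h w) z = a * (deriv ^^ l) g z + b * (deriv ^^ l) h z"
    if "l \<le> K" for l
    using that
  proof (induction l)
    case 0 then show ?case by simp
  next
    case (Suc l)
    show ?case
    proof
      fix z assume z: "z \<in> S"
      have "(deriv ^^ Suc l) (\<lambda>w. a * g w + b * h w) z = deriv ((deriv ^^ l) (\<lambda>w. a * g w + b * h w)) z"
        by simp
      also have "\<dots> = a * deriv ((deriv ^^ l) g) z + b * deriv ((deriv ^^ l) h) z"
        using transfer_open[OF S z _ D[of l z]] Suc z by auto
      finally show "(deriv ^^ Suc l) (\<lambda>w. a * g w + b * h w) z = a * (deriv ^^ Suc l) g z + b * (deriv ^^ Suc l) h z"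
        by simp
    qed
  qed
  have "k_times_differentiable_on K (\<lambda>w. a * g w + b * h w) S"
    unfolding k_times_differentiable_on_def
  proof (intro allI impI ballI)
    fix l z assume "l < K" "z \<in> S"
    then show "(deriv ^^ l) (\<lambda>w. a * g w + b * h w) field_differentiable at z"
      using transfer_open[OF S \<open>z \<in> S\<close> _ D[of l z]] E[of l] by auto
  qed
  with E show ?thesis by auto
qed

lemma kd_tw:
  assumes S: "open S" and s: "k_times_differentiable_on (Suc K) s S"
  shows "k_times_differentiable_on K (tw_deriv c s) S"
proof -
  have "tw_deriv c s = (\<lambda>w. 1 * deriv s w + c * s w)" by (auto simp: tw_deriv_def)
  moreover have "k_times_differentiable_on K (\<lambda>w. 1 * deriv s w + c * s w) S"
  proof -
    have s': "k_times_differentiable_on K s S" using kd_mono[OF s] by simp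
    show ?thesis using conjunct2[OF kd_lin[OF S kd_deriv[OF s] s', where a=1 and b=c]] by simp
  qed
  ultimately show ?thesis by simp
qed

lemma kd_twpow:
  assumes S: "open S" and s: "k_times_differentiable_on K s S"
  shows "m \<le> K \<Longrightarrow> k_times_differentiable_on (K - m) ((tw_deriv c ^^ m) s) S"
proof (induction m)
  case 0 then show ?case using s by simp
next
  case (Suc m)
  then have "k_times_differentiable_on (Suc (K - Suc m)) ((tw_deriv c ^^ m) s) S"
    by (simp add: Suc_diff_Suc)
  from kd_tw[OF S this] show ?case by simp
qed

lemma kd_diff0: "k_times_differentiable_on K g S \<Longrightarrow> 0 < K \<Longrightarrow> z \<in> S \<Longrightarrow>
   (g has_field_derivative deriv g z) (at z)"
  unfolding k_times_differentiable_on_def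
  by (metis funpow_0 field_differentiable_derivI)

lemma leibniz:
  assumes S: "open S" and f: "k_times_differentiable_on K f S" and s: "k_times_differentiable_on K s S"
  shows "j \<le> K \<Longrightarrow> z \<in> S \<Longrightarrow> (tw_deriv c ^^ j) (\<lambda>w. f w * s w) z
     = (\<Sum>k\<le>j. of_nat (j choose k) * (deriv ^^ k) f z * (tw_deriv c ^^ (j - k)) s z)"
proof (induction j arbitrary: z)
  case 0 then show ?case by simp
next
  case (Suc j)
  define a where "a k = (deriv ^^ k) f z" for k
  define b where "b m = (tw_deriv c ^^ m) s z" for m
  have dG: "((\<lambda>w. \<Sum>k\<le>j. of_nat (j choose k) * (deriv ^^ k) f w * (tw_deriv c ^^ (j - k)) s w)
      has_field_derivative
      (\<Sum>k\<le>j. of_nat (j choose k) * (a (Suc k) * b (j - k) + a k * (b (Suc (j - k)) - c * b (j - k))))) (at z)"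
  proof (rule DERIV_sum)
    fix k assume k: "k \<in> {..j}"
    have d1: "((deriv ^^ k) f has_field_derivative a (Suc k)) (at z)"
    proof -
      have "(deriv ^^ k) f field_differentiable at z"
        using f k Suc.prems unfolding k_times_differentiable_on_def by auto
      then show ?thesis by (simp add: a_def field_differentiable_derivI)
    qed
    have "k_times_differentiable_on (K - (j - k)) ((tw_deriv c ^^ (j - k)) s) S"
      using kd_twpow[OF S s, of "j - k" c] Suc.prems by auto
    from kd_diff0[OF this _ Suc.prems(2)] Suc.prems
    have d2: "((tw_deriv c ^^ (j - k)) s has_field_derivative (b (Suc (j - k)) - c * b (j - k))) (at z)"
      by (simp add: b_def tw_deriv_def)
    show "((\<lambda>w. of_nat (j choose k) * (deriv ^^ k) f w * (tw_deriv c ^^ (j - k)) s w) has_field_derivative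
        of_nat (j choose k) * (a (Suc k) * b (j - k) + a k * (b (Suc (j - k)) - c * b (j - k)))) (at z)"
      using d1 d2 by (auto intro!: derivative_eq_intros simp: a_def b_def algebra_simps)
  qed
  have "deriv ((tw_deriv c ^^ j) (\<lambda>w. f w * s w)) z
      = (\<Sum>k\<le>j. of_nat (j choose k) * (a (Suc k) * b (j - k) + a k * (b (Suc (j - k)) - c * b (j - k))))"
    using transfer_open[OF S Suc.prems(2) _ dG] Suc.IH Suc.prems by auto
  moreover have "(tw_deriv c ^^ j) (\<lambda>w. f w * s w) z = (\<Sum>k\<le>j. of_nat (j choose k) * a k * b (j - k))"
    using Suc by (simp add: a_def b_def)
  ultimately have "(tw_deriv c ^^ Suc j) (\<lambda>w. f w * s w) z
      = (\<Sum>k\<le>j. of_nat (j choose k) * (a (Suc k) * b (j - k) + a k * (b (Suc (j - k)) - c * b (j - k))))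
        + c * (\<Sum>k\<le>j. of_nat (j choose k) * a k * b (j - k))"
    by (simp add: tw_deriv_def)
  also have "\<dots> = (\<Sum>k\<le>j. of_nat (j choose k) * (a (Suc k) * b (j - k) + a k * b (Suc (j - k))))"
    by (simp add: sum_distrib_left sum.distrib[symmetric] algebra_simps)
  also have "\<dots> = (\<Sum>k\<le>Suc j. of_nat (Suc j choose k) * a k * b (Suc j - k))"
    by (rule comb_step)
  finally show ?case by (simp add: a_def b_def)
qed

theorem mainTheorem3:
  fixes n :: nat and \<gamma> :: "nat \<Rightarrow> complex" and f :: "complex \<Rightarrow> complex"
    and s :: "nat \<Rightarrow> complex \<Rightarrow> complex" and S :: "complex set"
  assumes "n \<ge> 1" and "open S"
    and "k_times_differentiable_on (n - 1) f S"
    and "\<And>i. i < n \<Longrightarrow> k_times_differentiable_on (n - 1) (s i) S"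
    and "z \<in> S"
  shows "twisted_wronskian n \<gamma> (\<lambda>i w. f w * s i w) z = f z ^ n * twisted_wronskian n \<gamma> s z"
proof -
  define B where "B = mat n n (\<lambda>(i, j). ((tw_deriv (\<gamma> i)) ^^ j) (s i) z)"
  define U where "U = mat n n (\<lambda>(l, j). if l \<le> j then of_nat (j choose l) * (deriv ^^ (j - l)) f z else 0)"
  define A where "A = mat n n (\<lambda>(i, j). ((tw_deriv (\<gamma> i)) ^^ j) (\<lambda>w. f w * s i w) z)"
  have AB: "A = B * U"
  proof (rule eq_matI)
    fix i j assume i: "i < dim_row (B * U)" and j: "j < dim_col (B * U)"
    then have i: "i < n" and j: "j < n" by (auto simp: B_def U_def)
    have "(B * U) $$ (i, j) = (\<Sum>l\<in>{0..<n}. (tw_deriv (\<gamma> i) ^^ l) (s i) z *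
            (if l \<le> j then of_nat (j choose l) * (deriv ^^ (j - l)) f z else 0))"
      using i j by (simp add: B_def U_def scalar_prod_def)
    also have "\<dots> = (\<Sum>l\<in>{0..j}. (tw_deriv (\<gamma> i) ^^ l) (s i) z *
            (of_nat (j choose l) * (deriv ^^ (j - l)) f z))"
      by (rule sum.mono_neutral_cong_right) (use j in auto)
    also have "\<dots> = (\<Sum>k\<in>{0..j}. of_nat (j choose k) * (deriv ^^ k) f z * (tw_deriv (\<gamma> i) ^^ (j - k)) (s i) z)"
      by (subst sum.atLeastAtMost_rev) (auto intro!: sum.cong simp: binomial_symmetric[symmetric])
    also have "\<dots> = A $$ (i, j)"
      using leibniz[OF assms(2) assms(3) assms(4)[OF i], of j z "\<gamma> i"] i j assms(1,5)
      by (simp add: A_def atLeast0AtMost)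
    finally show "A $$ (i, j) = (B * U) $$ (i, j)" by simp
  qed (auto simp: A_def B_def U_def)
  have Bc: "B \<in> carrier_mat n n" and Uc: "U \<in> carrier_mat n n" by (auto simp: B_def U_def)
  have "upper_triangular U" by (auto simp: upper_triangular_def U_def)
  then have "det U = prod_list (diag_mat U)" using det_upper_triangular Uc by blast
  also have "diag_mat U = replicate n (f z)"
    by (auto simp: diag_mat_def U_def intro!: nth_equalityI)
  finally have "det U = f z ^ n" by simp
  then have "det A = det B * f z ^ n" using AB det_mult[OF Bc Uc] by simp
  then show ?thesis by (simp add: twisted_wronskian_def A_def B_def)
qed

end
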